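(* Let $\mathcal{K}$ be an amenable closed convex cone in a finite-dimensional Euclidean space and let $P$ be a polyhedral set. Then $\mathcal{K}\cap P$ is an amenable convex set. In particular, if $\mathcal{K}$ is pointed, then $\mathcal{K}=\operatorname{cone}C$ for some compact amenable convex set $C$ (a slice of $\mathcal{K}$).
   Context: $\operatorname{cone}C=\{\lambda x: x\in C,\lambda\ge0\}$. Pointed means $\mathcal{K}\cap(-\mathcal{K})=\{0\}$. A face of a closed convex set $C$ is a closed convex subset $F\subseteq C$ such that whenever $x,y\in C$ and $\alpha x+(1-\alpha)y\in F$ for some $\alpha\in(0,1)$, then $x,y\in F$. A face $F$ of $C$ is amenable if for every bounded set $B$ there exists $\kappa>0$ such that $\operatorname{dist}(x,F)\le\kappa\operatorname{dist}(x,C)$ for all $x\in(\operatorname{aff}F)\cap B$; $C$ is amenable if all its faces are amenable. *)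

theory Defs
  imports "HOL-Analysis.Analysis"
begin

definition is_face :: "'a::euclidean_space set \<Rightarrow> 'a set \<Rightarrow> bool" where
  "is_face F C \<longleftrightarrow> closed F \<and> convex F \<and> F \<subseteq> C \<and>
     (\<forall>x\<in>C. \<forall>y\<in>C. \<forall>\<alpha>::real. 0 < \<alpha> \<and> \<alpha> < 1 \<and> \<alpha> *\<^sub>R x + (1 - \<alpha>) *\<^sub>R y \<in> F
        \<longrightarrow> x \<in> F \<and> y \<in> F)"

definition amenable_face :: "'a::euclidean_space set \<Rightarrow> 'a set \<Rightarrow> bool" where
  "amenable_face F C \<longleftrightarrow>
     (\<forall>B. bounded B \<longrightarrow> (\<exists>\<kappa>>0. \<forall>x \<in> (affine hull F) \<inter> B.
        infdist x F \<le> \<kappa> * infdist x C))"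

definition amenable_set :: "'a::euclidean_space set \<Rightarrow> bool" where
  "amenable_set C \<longleftrightarrow> closed C \<and> convex C \<and> (\<forall>F. is_face F C \<longrightarrow> amenable_face F C)"

definition cone_gen :: "'a::real_vector set \<Rightarrow> 'a set" where
  "cone_gen C = {t *\<^sub>R x | t x. x \<in> C \<and> (0::real) \<le> t}"

definition pointed :: "'a::real_vector set \<Rightarrow> bool" where
  "pointed K \<longleftrightarrow> K \<inter> uminus ` K = {0}"

end

theory Submission
  imports Defs
begin

lemma is_face_from_face_of:
  fixes F C :: "'a::euclidean_space set"
  assumes "closed F" "F face_of C"
  shows "is_face F C"
proof -
  have "x \<in> F \<and> y \<in> F" if xy: "x \<in> C" "y \<in> C" and h: "0 < \<alpha>" "\<alpha> < 1" "\<alpha> *\<^sub>R x + (1 - \<alpha>) *\<^sub>R y \<in> F"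
    for x y and \<alpha> :: real
  proof (cases "x = y")
    case True
    then have "\<alpha> *\<^sub>R x + (1 - \<alpha>) *\<^sub>R y = x" by (simp add: algebra_simps)
    then show ?thesis using h True by simp
  next
    case False
    have "\<alpha> *\<^sub>R x + (1 - \<alpha>) *\<^sub>R y \<in> open_segment x y"
      unfolding in_segment using False h by (intro conjI exI[of _ "1-\<alpha>"]) auto
    then show ?thesis using face_ofD[OF assms(2)] xy h by blast
  qed
  then show ?thesis unfolding is_face_def
    using assms face_of_imp_convex face_of_imp_subset by blast
qed

lemma ext_shrink:
  fixes C :: "'a::real_vector set"
  assumes "convex C" "z \<in> C" "z + e *\<^sub>R (z - y) \<in> C" "0 \<le> e'" "e' \<le> e"
  shows "z + e' *\<^sub>R (z - y) \<in> C"
proof (cases "e = 0")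
  case True then show ?thesis using assms by simp
next
  case False
  then have ep: "e > 0" using assms by simp
  have "z + e' *\<^sub>R (z - y) = (1 - e'/e) *\<^sub>R z + (e'/e) *\<^sub>R (z + e *\<^sub>R (z - y))"
    using ep by (simp add: algebra_simps)
  moreover have "(1 - e'/e) *\<^sub>R z + (e'/e) *\<^sub>R (z + e *\<^sub>R (z - y)) \<in> C"
    using assms ep by (intro convexD) (auto simp: field_simps)
  ultimately show ?thesis by simp
qed

definition mf :: "'a::real_vector set \<Rightarrow> 'a \<Rightarrow> 'a set" where
  "mf C z = {y \<in> C. \<exists>e>0. z + e *\<^sub>R (z - y) \<in> C}"

lemma mf_ext:
  fixes C :: "'a::real_vector set"
  assumes "convex C" "z \<in> C" "y \<in> mf C z"
  obtains e where "e > 0" "z + e *\<^sub>R (z - y) \<in> mf C z"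
proof -
  obtain e where e: "e > 0" "z + e *\<^sub>R (z - y) \<in> C" "y \<in> C" using assms(3) by (auto simp: mf_def)
  let ?p = "z + e *\<^sub>R (z - y)"
  have "(1/e) *\<^sub>R (z - ?p) = (1/e) *\<^sub>R (- (e *\<^sub>R (z - y)))" by simp
  also have "\<dots> = - (z - y)" using e by simp
  finally have "z + (1/e) *\<^sub>R (z - ?p) = y" by simp
  then have "z + (1/e) *\<^sub>R (z - ?p) \<in> C" using e by simp
  then have "\<exists>e'>0. z + e' *\<^sub>R (z - ?p) \<in> C" using e by (intro exI[of _ "1/e"]) simp
  then have "?p \<in> mf C z" using e unfolding mf_def by blast
  then show ?thesis using that e by blast
qed

lemma mf_face:
  fixes C :: "'a::euclidean_space set"
  assumes "convex C" "z \<in> C"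
  shows "mf C z face_of C"
  unfolding face_of_def
proof (intro conjI ballI impI)
  show "mf C z \<subseteq> C" by (auto simp: mf_def)
  show "convex (mf C z)"
    unfolding convex_alt
  proof (intro ballI allI impI)
    fix y1 y2 and u :: real
    assume y: "y1 \<in> mf C z" "y2 \<in> mf C z" and u: "0 \<le> u \<and> u \<le> 1"
    obtain e1 where e1: "e1 > 0" "z + e1 *\<^sub>R (z - y1) \<in> C" "y1 \<in> C" using y(1) by (auto simp: mf_def)
    obtain e2 where e2: "e2 > 0" "z + e2 *\<^sub>R (z - y2) \<in> C" "y2 \<in> C" using y(2) by (auto simp: mf_def)
    define e where "e = min e1 e2"
    have a1: "z + e *\<^sub>R (z - y1) \<in> C" using ext_shrink[OF assms e1(2)] e1 e2 by (simp add: e_def)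
    have a2: "z + e *\<^sub>R (z - y2) \<in> C" using ext_shrink[OF assms e2(2)] e1 e2 by (simp add: e_def)
    have "(1 - u) *\<^sub>R (z + e *\<^sub>R (z - y1)) + u *\<^sub>R (z + e *\<^sub>R (z - y2)) \<in> C"
      using a1 a2 u assms(1) by (intro convexD) auto
    moreover have "(1 - u) *\<^sub>R (z + e *\<^sub>R (z - y1)) + u *\<^sub>R (z + e *\<^sub>R (z - y2))
        = z + e *\<^sub>R (z - ((1 - u) *\<^sub>R y1 + u *\<^sub>R y2))"
      by (simp add: algebra_simps)
    moreover have "(1 - u) *\<^sub>R y1 + u *\<^sub>R y2 \<in> C" using e1 e2 u assms(1) by (intro convexD) auto
    moreover have "e > 0" using e1 e2 by (simp add: e_def)
    ultimately show "(1 - u) *\<^sub>R y1 + u *\<^sub>R y2 \<in> mf C z" by (auto simp: mf_def)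
  qed
next
  have key: "a \<in> mf C z" if ab: "a \<in> C" "b \<in> C" and u: "0 < u" "u < 1"
      and y: "(1 - u) *\<^sub>R a + u *\<^sub>R b \<in> mf C z" for a b u
  proof -
    let ?y = "(1 - u) *\<^sub>R a + u *\<^sub>R b"
    obtain e where e: "e > 0" "z + e *\<^sub>R (z - ?y) \<in> C" using y by (auto simp: mf_def)
    define q where "q = z + e *\<^sub>R (z - ?y)"
    define l1 where "l1 = 1 / (2 * (1 + u * e))"
    define e' where "e' = (1 - u) * e * l1"
    define l2 where "l2 = u * e * l1"
    have pos: "1 + u * e > 0" using u e by (simp add: add_pos_nonneg)
    have l1pos: "l1 > 0" unfolding l1_def using pos by simp
    have "e' > 0" unfolding e'_def using u e l1pos by simp
    have one: "1 = 2 * l1 * (1 + u * e)" unfolding l1_def using pos by simp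
    have l12: "2 * l1 + 2 * l2 = 1" unfolding l2_def using one by (simp add: algebra_simps)
    have eq: "(1/2) *\<^sub>R z + ((1/2) *\<^sub>R ((2*l1) *\<^sub>R q + (2*l2) *\<^sub>R b)) = z + e' *\<^sub>R (z - a)"
    proof -
      have "z + e' *\<^sub>R (z - a) = (2 * l1 * (1 + u * e)) *\<^sub>R z + e' *\<^sub>R (z - a)"
        using one by simp
      moreover have "(1/2) *\<^sub>R z + ((1/2) *\<^sub>R ((2*l1) *\<^sub>R q + (2*l2) *\<^sub>R b))
          = (l1 + u * e * l1) *\<^sub>R z + l1 *\<^sub>R q + l2 *\<^sub>R b"
      proof -
        have h: "(1/2::real) = l1 + u*e*l1" using one by (simp add: algebra_simps)
        have "(1/2::real) *\<^sub>R z = (l1 + u*e*l1) *\<^sub>R z" by (subst h) simp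
        moreover have "(1/2) *\<^sub>R ((2*l1) *\<^sub>R q + (2*l2) *\<^sub>R b) = l1 *\<^sub>R q + l2 *\<^sub>R b"
          by (simp add: scaleR_add_right)
        ultimately show ?thesis by (simp add: add.assoc)
      qed
      moreover have "(l1 + u * e * l1) *\<^sub>R z + l1 *\<^sub>R q + l2 *\<^sub>R b
           = (2 * l1 * (1 + u * e)) *\<^sub>R z + e' *\<^sub>R (z - a)"
        by (rule euclidean_eqI) (simp add: q_def l2_def e'_def inner_simps algebra_simps)
      ultimately show ?thesis by simp
    qed
    have "(2*l1) *\<^sub>R q + (2*l2) *\<^sub>R b \<in> C"
      using convexD[OF assms(1), of q b "2*l1" "2*l2"] e ab l12 l1pos u
      unfolding q_def l2_def by (simp add: e(2))
    then have "(1/2) *\<^sub>R z + ((1/2) *\<^sub>R ((2*l1) *\<^sub>R q + (2*l2) *\<^sub>R b)) \<in> C"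
      using convexD[OF assms(1), of z _ "1/2" "1/2"] assms(2) by simp
    then show ?thesis using eq \<open>e'>0\<close> ab by (auto simp: mf_def)
  qed
  have seg: "a \<in> mf C z \<and> b \<in> mf C z" if "a \<in> C" "b \<in> C" "x \<in> mf C z" "x \<in> open_segment a b" for a b x
  proof -
  from that obtain u where u: "0 < u" "u < 1" "x = (1 - u) *\<^sub>R a + u *\<^sub>R b" by (auto simp: in_segment)
  have "a \<in> mf C z" using key[OF \<open>a\<in>C\<close> \<open>b\<in>C\<close> u(1,2)] u \<open>x \<in> mf C z\<close> by simp
  have "(1 - (1-u)) *\<^sub>R b + (1-u) *\<^sub>R a = x" using u(3) by simp
  then have "b \<in> mf C z" using key[OF \<open>b\<in>C\<close> \<open>a\<in>C\<close>, of "1-u"] u \<open>x \<in> mf C z\<close>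
    by (simp add: add.commute)
  show "a \<in> mf C z \<and> b \<in> mf C z" using \<open>a \<in> mf C z\<close> \<open>b \<in> mf C z\<close> by simp
  qed
  fix a b x
  assume "a \<in> C" "b \<in> C" "x \<in> mf C z" "x \<in> open_segment a b"
  then show "a \<in> mf C z" using seg by blast
  fix a b x
  assume "a \<in> C" "b \<in> C" "x \<in> mf C z" "x \<in> open_segment a b"
  then show "b \<in> mf C z" using seg by blast
qed

lemma slide:
  fixes F :: "'a::euclidean_space set"
  assumes "convex F" "y \<in> F" "p \<in> F" "a \<bullet> p < b" "b \<le> a \<bullet> y"
  shows "\<exists>w\<in>F. a \<bullet> w = b \<and> dist y w \<le> (a \<bullet> y - b) / (b - a \<bullet> p) * dist y p"
proof -
  define l where "l = (a \<bullet> y - b) / (a \<bullet> y - a \<bullet> p)"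
  have den: "a \<bullet> y - a \<bullet> p > 0" using assms by simp
  have l0: "0 \<le> l" "l \<le> 1" unfolding l_def using assms den by (auto simp: divide_simps)
  define w where "w = (1 - l) *\<^sub>R y + l *\<^sub>R p"
  have "w \<in> F" unfolding w_def using assms l0 by (intro convexD) auto
  moreover have "a \<bullet> w = b"
  proof -
    have "a \<bullet> w = a \<bullet> y - l * (a \<bullet> y - a \<bullet> p)" unfolding w_def by (simp add: inner_simps algebra_simps)
    also have "\<dots> = b" unfolding l_def using den by simp
    finally show ?thesis .
  qed
  moreover have "dist y w \<le> (a \<bullet> y - b) / (b - a \<bullet> p) * dist y p"
  proof -
    have "y - w = l *\<^sub>R (y - p)" unfolding w_def by (simp add: algebra_simps)
    then have "dist y w = l * dist y p" using l0 by (simp add: dist_norm)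
    also have "\<dots> \<le> (a \<bullet> y - b) / (b - a \<bullet> p) * dist y p"
    proof (rule mult_right_mono)
      show "l \<le> (a \<bullet> y - b) / (b - a \<bullet> p)" unfolding l_def
        using assms den by (intro divide_left_mono) auto
    qed simp
    finally show ?thesis .
  qed
  ultimately show ?thesis by blast
qed

lemma relint_ext:
  fixes G :: "'a::euclidean_space set"
  assumes "z \<in> rel_interior G" "y \<in> G"
  obtains e where "e > 0" "z + e *\<^sub>R (z - y) \<in> G"
proof -
  obtain r where r: "r > 0" "ball z r \<inter> affine hull G \<subseteq> G" "z \<in> G"
    using assms(1) mem_rel_interior_ball by blast
  define e where "e = r / (2 * (norm (z - y) + 1))"
  have ep: "e > 0" unfolding e_def using r by (simp add: add_nonneg_pos)
  have "z + e *\<^sub>R (z - y) = (1 + e) *\<^sub>R z + (- e) *\<^sub>R y" by (simp add: algebra_simps)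
  moreover have "(1 + e) *\<^sub>R z + (- e) *\<^sub>R y \<in> affine hull G"
    using r(3) assms(2) by (intro mem_affine) (auto intro: hull_inc)
  ultimately have A: "z + e *\<^sub>R (z - y) \<in> affine hull G" by simp
  have "dist z (z + e *\<^sub>R (z - y)) = e * norm (z - y)" using ep by (simp add: dist_norm)
  also have "\<dots> < r"
  proof -
    have "e * norm (z - y) = r * (norm (z - y) / (2 * (norm (z - y) + 1)))" unfolding e_def by simp
    also have "\<dots> < r * 1"
    proof -
      have "norm (z - y) / (2 * (norm (z - y) + 1)) < 1"
        using norm_ge_zero[of "z - y"] by (simp add: divide_simps, linarith)
      then show ?thesis using r(1) by (intro mult_strict_left_mono) auto
    qed
    finally show ?thesis by simp
  qed
  finally have "z + e *\<^sub>R (z - y) \<in> ball z r" by simp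
  then show ?thesis using that ep A r(2) by blast
qed

lemma pull:
  fixes G D :: "'a::euclidean_space set"
  assumes "is_face G D" "z \<in> G" "y \<in> D" "z + e *\<^sub>R (z - y) \<in> D" "e > 0"
  shows "y \<in> G"
proof -
  define al where "al = e / (1 + e)"
  have al: "0 < al" "al < 1" unfolding al_def using assms(5) by auto
  have "al *\<^sub>R y + (1 - al) *\<^sub>R (z + e *\<^sub>R (z - y)) = z"
  proof -
    have f1: "(1 - al) * (1 + e) = 1" unfolding al_def using assms(5) by (simp add: field_simps)
    have f2: "(1 - al) * e = al" unfolding al_def using assms(5) by (simp add: field_simps)
    have "(1 - al) *\<^sub>R (z + e *\<^sub>R (z - y)) = ((1 - al) * (1 + e)) *\<^sub>R z - ((1 - al) * e) *\<^sub>R y"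
      by (simp add: algebra_simps)
    also have "\<dots> = z - al *\<^sub>R y" using f1 f2 by simp
    finally show ?thesis by simp
  qed
  then show ?thesis using assms(1,2,3,4) al unfolding is_face_def by metis
qed

lemma combine:
  fixes dF dD s d M L k1 t :: real
  assumes "dF \<le> k1 * dD" "0 \<le> dF" "s \<le> L * (dF + dD)" "d > 0" "0 \<le> t" "t \<le> M"
    "0 \<le> L" "0 \<le> s" "0 \<le> dD" "k1 > 0"
  shows "dF + s / d * t \<le> (k1 + L * (k1 + 1) * M / d) * dD"
proof -
  have "s / d * t \<le> s / d * M" using assms by (intro mult_left_mono) auto
  also have "\<dots> \<le> (L * (k1 + 1) * dD) / d * M"
  proof (intro mult_right_mono divide_right_mono)
    have "L * (dF + dD) \<le> L * (k1 * dD + dD)" using assms by (intro mult_left_mono) auto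
    then show "s \<le> L * (k1 + 1) * dD" using assms(3) by (simp add: algebra_simps)
  qed (use assms in auto)
  also have "\<dots> = L * (k1 + 1) * M / d * dD" by simp
  finally show ?thesis using assms(1) by (simp add: algebra_simps)
qed

lemma inner_dist_bound:
  fixes a u v :: "'a::euclidean_space"
  shows "a \<bullet> u - a \<bullet> v \<le> norm a * dist u v"
  using norm_cauchy_schwarz[of a "u - v"] by (simp add: inner_diff_right dist_norm)

lemma halfspace_step:
  fixes C :: "'a::euclidean_space set"
  assumes amC: "amenable_set C"
  shows "amenable_set (C \<inter> {x. a \<bullet> x \<le> b})"
proof -
  define D where "D = C \<inter> {x. a \<bullet> x \<le> b}"
  have clC: "closed C" and cvC: "convex C" using amC by (auto simp: amenable_set_def)
  have clD: "closed D" unfolding D_def using clC by (intro closed_Int closed_halfspace_le)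
  have cvD: "convex D" unfolding D_def using cvC by (intro convex_Int convex_halfspace_le)
  have "amenable_face G D" if faceG: "is_face G D" for G
    unfolding amenable_face_def
  proof (intro allI impI)
    fix B :: "'a set"
    assume "bounded B"
    then obtain R where R: "R > 0" "\<And>x. x \<in> B \<Longrightarrow> norm x \<le> R" by (auto simp: bounded_pos)
    show "\<exists>\<kappa>>0. \<forall>x\<in>affine hull G \<inter> B. infdist x G \<le> \<kappa> * infdist x D"
    proof (cases "G = {}")
      case True then show ?thesis by (intro exI[of _ 1]) simp
    next
      case False
      have cvG: "convex G" and GD: "G \<subseteq> D" using faceG by (auto simp: is_face_def)
      obtain z where z: "z \<in> rel_interior G" using False cvG rel_interior_eq_empty by blast
      have zG: "z \<in> G" using z rel_interior_subset by blast
      have zD: "z \<in> D" using zG GD by blast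
      have zC: "z \<in> C" using zD by (simp add: D_def)
      have azb: "a \<bullet> z \<le> b" using zD by (simp add: D_def)
      have DC: "D \<subseteq> C" by (simp add: D_def)
      have Dne: "D \<noteq> {}" using zD by blast
      define F where "F = mf C z"
      have Ff: "F face_of C" unfolding F_def by (rule mf_face[OF cvC zC])
      have clF: "closed F" using face_of_imp_closed[OF cvC clC Ff] .
      have cvF: "convex F" using Ff face_of_imp_convex by blast
      have FC: "F \<subseteq> C" using Ff face_of_imp_subset by blast
      have "amenable_face F C" using amC is_face_from_face_of[OF clF Ff] by (simp add: amenable_set_def)
      then obtain k1 where k1: "k1 > 0" "\<And>x. x \<in> affine hull F \<inter> B \<Longrightarrow> infdist x F \<le> k1 * infdist x C"
        using \<open>bounded B\<close> unfolding amenable_face_def by blast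
      have zF: "z \<in> F" unfolding F_def mf_def using zC by (auto intro: exI[of _ 1])
      have GF: "G \<subseteq> F"
      proof
        fix y assume "y \<in> G"
        then obtain e where "e > 0" "z + e *\<^sub>R (z - y) \<in> G" using relint_ext[OF z] by blast
        then show "y \<in> F" unfolding F_def mf_def using GD DC \<open>y \<in> G\<close> by blast
      qed
      have affGF: "affine hull G \<subseteq> affine hull F" using GF by (rule hull_mono)
      have basic: "\<exists>y\<in>F. dist x y = infdist x F \<and> infdist x F \<le> k1 * infdist x D
          \<and> (\<forall>p\<in>F. dist x y \<le> dist x p) \<and> a \<bullet> x - b \<le> norm a * infdist x D \<and> 0 \<le> infdist x D"
        if x: "x \<in> affine hull G" "x \<in> B" for x
      proof -
        have Fne: "F \<noteq> {}" using zF by blast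
        obtain y where y: "y \<in> F" "infdist x F = dist x y" using infdist_attains_inf[OF clF Fne] by blast
        obtain d where d: "d \<in> D" "infdist x D = dist x d" using infdist_attains_inf[OF clD Dne] by blast
        have "infdist x F \<le> k1 * infdist x C" using k1(2) x affGF by blast
        also have "\<dots> \<le> k1 * infdist x D" using k1(1) infdist_mono[OF DC Dne] by simp
        finally have i1: "infdist x F \<le> k1 * infdist x D" .
        have "\<forall>p\<in>F. dist x y \<le> dist x p" using y infdist_le[of _ F x] by simp
        moreover have "a \<bullet> x - b \<le> norm a * infdist x D"
        proof -
          have "a \<bullet> d \<le> b" using d by (simp add: D_def)
          then show ?thesis using inner_dist_bound[of a x d] d by simp
        qed
        ultimately show ?thesis using y i1 infdist_nonneg by auto
      qed
      have tri: "dist y p \<le> 2 * R + 2 * norm p" if "x \<in> B" "dist x y \<le> dist x p" for x y p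
      proof -
        have "dist x p \<le> R + norm p" using R(2)[OF that(1)] norm_triangle_ineq4[of x p]
          by (simp add: dist_norm)
        moreover have "dist y p \<le> dist x y + dist x p" by (metis dist_commute dist_triangle)
        ultimately show ?thesis using that(2) by simp
      qed
      show ?thesis
      proof (cases "a \<bullet> z < b")
        case True
        define dl where "dl = b - a \<bullet> z"
        have dl: "dl > 0" using True by (simp add: dl_def)
        define M where "M = 2 * R + 2 * norm z"
        define \<kappa> where "\<kappa> = k1 + norm a * (k1 + 1) * M / dl"
        have M0: "M \<ge> 0" unfolding M_def using R by simp
        have k1k: "k1 \<le> \<kappa>" unfolding \<kappa>_def using dl M0 k1 by simp
        have FH: "y' \<in> G" if yF: "y' \<in> F" and yH: "a \<bullet> y' \<le> b" for y'
        proof -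
          obtain e where e: "e > 0" "z + e *\<^sub>R (z - y') \<in> C" "y' \<in> C" using yF by (auto simp: F_def mf_def)
          define c where "c = \<bar>a \<bullet> z - a \<bullet> y'\<bar>"
          define e' where "e' = min e (dl / (c + 1))"
          have c0: "c \<ge> 0" unfolding c_def by simp
          have e'0: "e' > 0" unfolding e'_def using e dl c0 by simp
          have pC: "z + e' *\<^sub>R (z - y') \<in> C" using ext_shrink[OF cvC zC e(2)] e'0 by (simp add: e'_def)
          have "e' * c \<le> e' * (c + 1)" using e'0 by simp
          also have "\<dots> \<le> dl / (c + 1) * (c + 1)" using c0 e'0 by (intro mult_right_mono) (auto simp: e'_def)
          also have "\<dots> = dl" using c0 by simp
          finally have ec: "e' * c \<le> dl" .
          have "a \<bullet> (z + e' *\<^sub>R (z - y')) = a \<bullet> z + e' * (a \<bullet> z - a \<bullet> y')" by (simp add: inner_simps algebra_simps)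
          also have "\<dots> \<le> a \<bullet> z + e' * c" using e'0 by (intro add_left_mono mult_left_mono) (auto simp: c_def)
          also have "\<dots> \<le> b" using ec by (simp add: dl_def)
          finally have "z + e' *\<^sub>R (z - y') \<in> D" using pC by (simp add: D_def)
          moreover have "y' \<in> D" using e(3) yH by (simp add: D_def)
          ultimately show ?thesis using pull[OF faceG zG] e'0 by blast
        qed
        have "\<kappa> > 0" using k1k k1 by simp
        moreover have "infdist x G \<le> \<kappa> * infdist x D" if x: "x \<in> affine hull G \<inter> B" for x
        proof -
          obtain y where y: "y \<in> F" "dist x y = infdist x F" "infdist x F \<le> k1 * infdist x D"
             "\<forall>p\<in>F. dist x y \<le> dist x p" "a \<bullet> x - b \<le> norm a * infdist x D" "0 \<le> infdist x D"
            using basic[of x] x by blast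
          show ?thesis
          proof (cases "a \<bullet> y \<le> b")
            case True
            then have "y \<in> G" using FH y(1) by blast
            then have "infdist x G \<le> dist x y" by (rule infdist_le)
            also have "\<dots> \<le> k1 * infdist x D" using y by simp
            also have "\<dots> \<le> \<kappa> * infdist x D" using k1k y(6) by (intro mult_right_mono) auto
            finally show ?thesis .
          next
            case False
            obtain w where w: "w \<in> F" "a \<bullet> w = b" "dist y w \<le> (a \<bullet> y - b) / (b - a \<bullet> z) * dist y z"
              using slide[OF cvF y(1) zF True] False by auto
            have wG: "w \<in> G" using FH w by simp
            have t: "dist y z \<le> M" unfolding M_def using tri[of x y z] x y(4) zF by auto
            have sb: "a \<bullet> y - b \<le> norm a * (dist x y + infdist x D)"
              using inner_dist_bound[of a y x] y(5) by (simp add: dist_commute algebra_simps)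
            have "infdist x G \<le> dist x w" using wG by (rule infdist_le)
            also have "\<dots> \<le> dist x y + dist y w" by (rule dist_triangle)
            also have "\<dots> \<le> dist x y + (a \<bullet> y - b) / dl * dist y z" using w(3) by (simp add: dl_def)
            also have "\<dots> \<le> \<kappa> * infdist x D" unfolding \<kappa>_def
              using combine[of "dist x y" k1 "infdist x D" "a \<bullet> y - b" "norm a" dl "dist y z" M]
                y sb dl t k1 False infdist_nonneg[of x F] by simp
            finally show ?thesis .
          qed
        qed
        ultimately show ?thesis by blast
      next
        case False
        then have azb': "a \<bullet> z = b" using azb by simp
        have GE: "a \<bullet> y = b" if yG: "y \<in> G" for y
        proof (rule ccontr)
          assume ne: "a \<bullet> y \<noteq> b"
          have "a \<bullet> y \<le> b" using yG GD by (auto simp: D_def)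
          with ne have lt: "a \<bullet> y < b" by simp
          obtain e where e: "e > 0" "z + e *\<^sub>R (z - y) \<in> G" using relint_ext[OF z yG] by blast
          have "a \<bullet> (z + e *\<^sub>R (z - y)) = b + e * (b - a \<bullet> y)" using azb' by (simp add: inner_simps algebra_simps)
          also have "\<dots> > b" using e lt by simp
          finally show False using e(2) GD by (auto simp: D_def)
        qed
        have affE: "affine hull G \<subseteq> {x. a \<bullet> x = b}"
          using GE by (intro hull_minimal affine_hyperplane) auto
        have FE: "y' \<in> G" if yF: "y' \<in> F" and yE: "a \<bullet> y' = b" for y'
        proof -
          obtain e where e: "e > 0" "z + e *\<^sub>R (z - y') \<in> C" "y' \<in> C" using yF by (auto simp: F_def mf_def)
          have "a \<bullet> (z + e *\<^sub>R (z - y')) = b" using azb' yE by (simp add: inner_simps algebra_simps)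
          then have "z + e *\<^sub>R (z - y') \<in> D" using e by (simp add: D_def)
          moreover have "y' \<in> D" using e(3) yE by (simp add: D_def)
          ultimately show ?thesis using pull[OF faceG zG] e by blast
        qed
        show ?thesis
        proof (cases "\<forall>u\<in>F. a \<bullet> u = b")
          case True
          have "infdist x G \<le> k1 * infdist x D" if x: "x \<in> affine hull G \<inter> B" for x
          proof -
            obtain y where y: "y \<in> F" "dist x y = infdist x F" "infdist x F \<le> k1 * infdist x D"
              using basic[of x] x by blast
            have "y \<in> G" using FE y(1) True by blast
            then have "infdist x G \<le> dist x y" by (rule infdist_le)
            then show ?thesis using y by simp
          qed
          then show ?thesis using k1 by blast
        next
          case False
          then obtain u where u: "u \<in> F" "a \<bullet> u \<noteq> b" by blast
          obtain e where e: "e > 0" "z + e *\<^sub>R (z - u) \<in> F"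
            using mf_ext[OF cvC zC, of u] u unfolding F_def by blast
          have ap2: "a \<bullet> (z + e *\<^sub>R (z - u)) - b = - e * (a \<bullet> u - b)" using azb' by (simp add: inner_simps algebra_simps)
          obtain pl ph where p: "pl \<in> F" "ph \<in> F" "a \<bullet> pl < b" "b < a \<bullet> ph"
          proof (cases "a \<bullet> u < b")
            case True
            have "e * (a \<bullet> u - b) < 0" using e True by (simp add: mult_pos_neg)
            then have "b < a \<bullet> (z + e *\<^sub>R (z - u))" using ap2 by linarith
            then show ?thesis using that u e True by blast
          next
            case False
            then have "b < a \<bullet> u" using u by simp
            moreover have "e * (a \<bullet> u - b) > 0" using e \<open>b < a \<bullet> u\<close> by simp
            then have "a \<bullet> (z + e *\<^sub>R (z - u)) < b" using ap2 by linarith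
            ultimately show ?thesis using that u e by blast
          qed
          define dl where "dl = min (b - a \<bullet> pl) (a \<bullet> ph - b)"
          have dl: "dl > 0" using p by (simp add: dl_def)
          define M where "M = 2 * R + 2 * norm pl + 2 * norm ph"
          define \<kappa> where "\<kappa> = k1 + norm a * (k1 + 1) * M / dl"
          have M0: "M \<ge> 0" unfolding M_def using R by simp
          have Meq: "M = 2 * R + 2 * norm pl + 2 * norm ph" unfolding M_def by simp
          have n0: "0 \<le> norm pl" "0 \<le> norm ph" by simp_all
          have k1k: "k1 \<le> \<kappa>" unfolding \<kappa>_def using dl M0 k1 by simp
          have "\<kappa> > 0" using k1k k1 by simp
          moreover have "infdist x G \<le> \<kappa> * infdist x D" if x: "x \<in> affine hull G \<inter> B" for x
          proof -
            obtain y where y: "y \<in> F" "dist x y = infdist x F" "infdist x F \<le> k1 * infdist x D"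
               "\<forall>p\<in>F. dist x y \<le> dist x p" "a \<bullet> x - b \<le> norm a * infdist x D" "0 \<le> infdist x D"
              using basic[of x] x by blast
            have axb: "a \<bullet> x = b" using affE x by auto
            have dF0: "0 \<le> dist x y" by simp
            have sb1: "a \<bullet> y - b \<le> norm a * (dist x y + infdist x D)"
            proof -
              have "a \<bullet> y - b \<le> norm a * dist x y" using inner_dist_bound[of a y x] axb by (simp add: dist_commute)
              moreover have "0 \<le> norm a * infdist x D" using y(6) by simp
              ultimately show ?thesis by (simp add: distrib_left)
            qed
            have sb2: "b - a \<bullet> y \<le> norm a * (dist x y + infdist x D)"
            proof -
              have "b - a \<bullet> y \<le> norm a * dist x y" using inner_dist_bound[of a x y] axb by simp
              moreover have "0 \<le> norm a * infdist x D" using y(6) by simp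
              ultimately show ?thesis by (simp add: distrib_left)
            qed
            have "dist y pl \<le> 2 * R + 2 * norm pl" using tri[of x y pl] x y(4) p(1) by auto
            then have tl: "dist y pl \<le> M" using Meq n0 by linarith
            have "dist y ph \<le> 2 * R + 2 * norm ph" using tri[of x y ph] x y(4) p(2) by auto
            then have th: "dist y ph \<le> M" using Meq n0 by linarith
            consider "a \<bullet> y = b" | "b < a \<bullet> y" | "a \<bullet> y < b" by linarith
            then show ?thesis
            proof cases
              case 1
              then have "y \<in> G" using FE y(1) by blast
              then have "infdist x G \<le> dist x y" by (rule infdist_le)
              also have "\<dots> \<le> k1 * infdist x D" using y by simp
              also have "\<dots> \<le> \<kappa> * infdist x D" using k1k y(6) by (intro mult_right_mono) auto
              finally show ?thesis .
            next
              case 2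
              obtain w where w: "w \<in> F" "a \<bullet> w = b" "dist y w \<le> (a \<bullet> y - b) / (b - a \<bullet> pl) * dist y pl"
                using slide[OF cvF y(1) p(1) p(3)] 2 by auto
              have wG: "w \<in> G" using FE w by simp
              have "(a \<bullet> y - b) / (b - a \<bullet> pl) \<le> (a \<bullet> y - b) / dl"
                using 2 dl by (intro divide_left_mono) (auto simp: dl_def)
              then have w3: "dist y w \<le> (a \<bullet> y - b) / dl * dist y pl"
                using w(3) by (meson mult_right_mono order_trans zero_le_dist)
              have "infdist x G \<le> dist x w" using wG by (rule infdist_le)
              also have "\<dots> \<le> dist x y + dist y w" by (rule dist_triangle)
              also have "\<dots> \<le> dist x y + (a \<bullet> y - b) / dl * dist y pl" using w3 by simp
              also have "\<dots> \<le> \<kappa> * infdist x D" unfolding \<kappa>_def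
                using combine[of "dist x y" k1 "infdist x D" "a \<bullet> y - b" "norm a" dl "dist y pl" M]
                  y sb1 dl tl k1 2 infdist_nonneg[of x F] by simp
              finally show ?thesis .
            next
              case 3
              obtain w where w: "w \<in> F" "(-a) \<bullet> w = -b"
                  "dist y w \<le> ((-a) \<bullet> y - (-b)) / ((-b) - (-a) \<bullet> ph) * dist y ph"
                using slide[OF cvF y(1) p(2), of "-a" "-b"] 3 p(4) by auto
              have wG: "w \<in> G" using FE w by simp
              have "(b - a \<bullet> y) / (a \<bullet> ph - b) \<le> (b - a \<bullet> y) / dl"
                using 3 dl by (intro divide_left_mono) (auto simp: dl_def)
              moreover have "((-a) \<bullet> y - (-b)) / ((-b) - (-a) \<bullet> ph) = (b - a \<bullet> y) / (a \<bullet> ph - b)"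
                by (simp add: algebra_simps)
              ultimately have w3: "dist y w \<le> (b - a \<bullet> y) / dl * dist y ph"
                using w(3) by (metis mult_right_mono order_trans zero_le_dist)
              have "infdist x G \<le> dist x w" using wG by (rule infdist_le)
              also have "\<dots> \<le> dist x y + dist y w" by (rule dist_triangle)
              also have "\<dots> \<le> dist x y + (b - a \<bullet> y) / dl * dist y ph" using w3 by simp
              also have "\<dots> \<le> \<kappa> * infdist x D" unfolding \<kappa>_def
                using combine[of "dist x y" k1 "infdist x D" "b - a \<bullet> y" "norm a" dl "dist y ph" M]
                  y sb2 dl th k1 3 infdist_nonneg[of x F] by simp
              finally show ?thesis .
            qed
          qed
          ultimately show ?thesis by blast
        qed
      qed
    qed
  qed
  then show ?thesis unfolding amenable_set_def using clD cvD D_def by blast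
qed

lemma poly_inter:
  fixes K P :: "'a::euclidean_space set"
  assumes "amenable_set K" "polyhedron P"
  shows "amenable_set (K \<inter> P)"
proof -
  obtain F where F: "finite F" "P = \<Inter> F" "\<forall>h\<in>F. \<exists>a b. a \<noteq> 0 \<and> h = {x. a \<bullet> x \<le> b}"
    using assms(2) unfolding polyhedron_def by blast
  have "(\<forall>h\<in>F. \<exists>a b. a \<noteq> 0 \<and> h = {x. a \<bullet> x \<le> b}) \<longrightarrow> amenable_set (K \<inter> \<Inter> F)"
    using F(1)
  proof (induction F rule: finite_induct)
    case empty
    then show ?case using assms(1) by simp
  next
    case (insert h F)
    show ?case
    proof
      assume H: "\<forall>h'\<in>insert h F. \<exists>a b. a \<noteq> 0 \<and> h' = {x. a \<bullet> x \<le> b}"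
      then obtain a b where h: "h = {x. a \<bullet> x \<le> b}" by blast
      have "amenable_set (K \<inter> \<Inter> F)" using insert H by blast
      then have "amenable_set ((K \<inter> \<Inter> F) \<inter> {x. a \<bullet> x \<le> b})" by (rule halfspace_step)
      moreover have "K \<inter> \<Inter> (insert h F) = (K \<inter> \<Inter> F) \<inter> {x. a \<bullet> x \<le> b}" using h by blast
      ultimately show "amenable_set (K \<inter> \<Inter> (insert h F))" by simp
    qed
  qed
  then show ?thesis using F by simp
qed

theorem proposition4p1:
  fixes K P :: "'a::euclidean_space set"
  assumes "closed K" and "convex K" and "cone K" and "amenable_set K"
    and "polyhedron P"
  shows "amenable_set (K \<inter> P) \<and>
    (pointed K \<longrightarrow> (\<exists>C. compact C \<and> convex C \<and> amenable_set C \<and> C \<subseteq> K \<and> K = cone_gen C))"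
proof
  show "amenable_set (K \<inter> P)" using poly_inter assms(4,5) by blast
  define C where "C = K \<inter> cbox (- One) (One :: 'a)"
  have "compact C" unfolding C_def using assms(1) by (intro closed_Int_compact compact_cbox)
  moreover have "convex C" unfolding C_def using assms(2) by (intro convex_Int convex_box)
  moreover have "amenable_set C" unfolding C_def using poly_inter assms(4) polyhedron_interval by blast
  moreover have "C \<subseteq> K" by (simp add: C_def)
  moreover have "K = cone_gen C"
  proof
    show "cone_gen C \<subseteq> K" using assms(3) unfolding cone_gen_def cone_def C_def by blast
    show "K \<subseteq> cone_gen C"
    proof
      fix y assume yK: "y \<in> K"
      define t where "t = norm y + 1"
      have t: "t > 0" unfolding t_def by (simp add: add_nonneg_pos)
      define x where "x = (1 / t) *\<^sub>R y"
      have xK: "x \<in> K" using assms(3) yK t unfolding cone_def x_def by simp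
      have nx: "norm x \<le> 1" using t unfolding x_def t_def by (simp add: divide_simps)
      have "x \<in> cbox (- One) One"
        unfolding mem_box
      proof
        fix i :: 'a assume i: "i \<in> Basis"
        have "\<bar>x \<bullet> i\<bar> \<le> 1" using Basis_le_norm[OF i, of x] nx by simp
        then show "(- One) \<bullet> i \<le> x \<bullet> i \<and> x \<bullet> i \<le> One \<bullet> i" using i by (simp add: inner_minus_left abs_le_iff)
      qed
      moreover have "y = t *\<^sub>R x" unfolding x_def using t by simp
      ultimately show "y \<in> cone_gen C" unfolding cone_gen_def C_def using xK t by (auto intro!: exI[of _ t] exI[of _ x])
    qed
  qed
  ultimately show "pointed K \<longrightarrow> (\<exists>C. compact C \<and> convex C \<and> amenable_set C \<and> C \<subseteq> K \<and> K = cone_gen C)"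
    by blast
qed

end
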